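(* Let $\Sigma$ be a theory and let $A,B \subseteq \mathcal{T}_Y$ be finite. Then the following are equivalent: (1) $\Sigma \cup \{\emptyset \Rightarrow A\} \vdash \emptyset \Rightarrow B$; (2) there are $i_1,\ldots,i_n \in \mathbb{Z}$ such that $\Sigma \vdash \bigcup_{m=1}^n (A+i_m) \Rightarrow B$.
   Context: $Y$ is a non-empty finite set of attributes and $\mathcal{T}_Y = \{y^i \mid y \in Y, i \in \mathbb{Z}\}$; $M + j = \{y^{i+j} \mid y^i \in M\}$. A formula is $A \Rightarrow B$ with $A,B$ finite subsets of $\mathcal{T}_Y$; a theory is a set of formulas. Deduction rules (for arbitrary finite $A,B,C,D \subseteq \mathcal{T}_Y$, $i \in \mathbb{Z}$): (Ax) infer $A \cup B \Rightarrow A$; (Cut) from $A \Rightarrow B$ and $B \cup C \Rightarrow D$ infer $A \cup C \Rightarrow D$; (Shf) from $A \Rightarrow B$ infer $A+i \Rightarrow B+i$. $\Sigma \vdash A \Rightarrow B$ means there is a finite sequence of formulas ending with $A \Rightarrow B$ in which each member is in $\Sigma$ or is the conclusion of one of these rules applied to earlier members. *)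

theory Defs
  imports Main
begin

(* Attributes range over a finite (hence non-empty) type 'a, playing the role of Y.
   A time-stamped attribute y^i is the pair (y, i). *)
type_synonym 'a tattr = "'a \<times> int"

(* A formula A \<Rightarrow> B is the pair (A, B) of (finite) sets of time-stamped attributes. *)
type_synonym 'a fml = "'a tattr set \<times> 'a tattr set"

definition shift :: "'a tattr set \<Rightarrow> int \<Rightarrow> 'a tattr set" where
  "shift M j = (\<lambda>(y, i). (y, i + j)) ` M"

definition is_fml :: "'a fml \<Rightarrow> bool" where
  "is_fml \<phi> \<longleftrightarrow> finite (fst \<phi>) \<and> finite (snd \<phi>)"

definition is_theory :: "'a fml set \<Rightarrow> bool" where
  "is_theory \<Sigma> \<longleftrightarrow> (\<forall>\<phi>\<in>\<Sigma>. is_fml \<phi>)"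

definition rule_concl :: "'a fml set \<Rightarrow> 'a fml \<Rightarrow> bool" where
  "rule_concl S \<phi> \<longleftrightarrow>
     (\<exists>A B. finite A \<and> finite B \<and> \<phi> = (A \<union> B, A))
   \<or> (\<exists>A B C D. finite A \<and> finite B \<and> finite C \<and> finite D \<and>
        (A, B) \<in> S \<and> (B \<union> C, D) \<in> S \<and> \<phi> = (A \<union> C, D))
   \<or> (\<exists>A B i. finite A \<and> finite B \<and> (A, B) \<in> S \<and> \<phi> = (shift A i, shift B i))"

definition provable :: "'a fml set \<Rightarrow> 'a fml \<Rightarrow> bool" where
  "provable \<Sigma> \<phi> \<longleftrightarrow> (\<exists>fs. fs \<noteq> [] \<and> last fs = \<phi> \<and>
     (\<forall>k < length fs. fs ! k \<in> \<Sigma> \<or> rule_concl (set (take k fs)) (fs ! k)))"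

end

theory Submission
  imports Defs
begin

inductive der :: "'a fml set \<Rightarrow> 'a fml \<Rightarrow> bool" for S where
  mem: "\<phi> \<in> S \<Longrightarrow> der S \<phi>"
| ax: "finite A \<Longrightarrow> finite B \<Longrightarrow> der S (A \<union> B, A)"
| cut: "finite A \<Longrightarrow> finite B \<Longrightarrow> finite C \<Longrightarrow> finite D \<Longrightarrow> der S (A,B) \<Longrightarrow> der S (B \<union> C, D) \<Longrightarrow> der S (A \<union> C, D)"
| shf: "finite A \<Longrightarrow> finite B \<Longrightarrow> der S (A,B) \<Longrightarrow> der S (shift A i, shift B i)"

definition valid :: "'a fml set \<Rightarrow> 'a fml list \<Rightarrow> bool" where
  "valid S fs \<longleftrightarrow> (\<forall>k < length fs. fs ! k \<in> S \<or> rule_concl (set (take k fs)) (fs ! k))"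

lemma rc_ax: "finite A \<Longrightarrow> finite B \<Longrightarrow> rule_concl S (A \<union> B, A)"
  unfolding rule_concl_def by (rule disjI1, intro exI[of _ A] exI[of _ B] conjI) auto
lemma rc_cut: "finite A \<Longrightarrow> finite B \<Longrightarrow> finite C \<Longrightarrow> finite D \<Longrightarrow>
   (A, B) \<in> S \<Longrightarrow> (B \<union> C, D) \<in> S \<Longrightarrow> rule_concl S (A \<union> C, D)"
  unfolding rule_concl_def
  by (rule disjI2, rule disjI1, intro exI[of _ A] exI[of _ B] exI[of _ C] exI[of _ D] conjI) auto
lemma rc_shf: "finite A \<Longrightarrow> finite B \<Longrightarrow> (A, B) \<in> S \<Longrightarrow> rule_concl S (shift A i, shift B i)"
  unfolding rule_concl_def
  by (rule disjI2, rule disjI2, intro exI[of _ A] exI[of _ B] exI[of _ i] conjI) auto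


lemma rule_concl_mono: "S \<subseteq> T \<Longrightarrow> rule_concl S \<phi> \<Longrightarrow> rule_concl T \<phi>"
proof -
  assume st: "S \<subseteq> T" and r: "rule_concl S \<phi>"
  show "rule_concl T \<phi>"
    using r unfolding rule_concl_def[of S]
  proof (elim disjE exE conjE)
    fix A B assume "finite A" "finite B" "\<phi> = (A \<union> B, A)"
    then show ?thesis using rc_ax[of A B T] by simp
  next
    fix A B C D assume h: "finite A" "finite B" "finite C" "finite D" "(A, B) \<in> S"
      "(B \<union> C, D) \<in> S" "\<phi> = (A \<union> C, D)"
    have "(A, B) \<in> T" "(B \<union> C, D) \<in> T" using h(5,6) st by auto
    then show ?thesis using h(7) rc_cut[OF h(1-4)] by simp
  next
    fix A B i assume h: "finite A" "finite B" "(A, B) \<in> S" "\<phi> = (shift A i, shift B i)"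
    have "(A, B) \<in> T" using h(3) st by auto
    then show ?thesis using h(4) rc_shf[OF h(1,2)] by simp
  qed
qed

lemma valid_append:
  assumes "valid S fs1" "valid S fs2" shows "valid S (fs1 @ fs2)"
  unfolding valid_def
proof (intro allI impI)
  fix k assume k: "k < length (fs1 @ fs2)"
  show "(fs1 @ fs2) ! k \<in> S \<or> rule_concl (set (take k (fs1 @ fs2))) ((fs1 @ fs2) ! k)"
  proof (cases "k < length fs1")
    case True
    have e1: "(fs1 @ fs2) ! k = fs1 ! k" using True by (simp add: nth_append)
    have e2: "take k (fs1 @ fs2) = take k fs1" using True by simp
    from assms(1) True show ?thesis unfolding valid_def e1 e2 by blast
  next
    case False
    then have k2: "k - length fs1 < length fs2" using k by auto
    have sub: "set (take (k - length fs1) fs2) \<subseteq> set (take k (fs1 @ fs2))"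
      using False by (simp add: take_append)
    have e: "(fs1 @ fs2) ! k = fs2 ! (k - length fs1)" using False by (simp add: nth_append)
    from assms(2) k2 have "fs2 ! (k - length fs1) \<in> S \<or>
        rule_concl (set (take (k - length fs1) fs2)) (fs2 ! (k - length fs1))"
      unfolding valid_def by blast
    then have "fs2 ! (k - length fs1) \<in> S \<or>
        rule_concl (set (take k (fs1 @ fs2))) (fs2 ! (k - length fs1))"
      using rule_concl_mono[OF sub] by blast
    then show ?thesis unfolding e .
  qed
qed

lemma valid_snoc:
  assumes "valid S fs" "\<phi> \<in> S \<or> rule_concl (set fs) \<phi>" shows "valid S (fs @ [\<phi>])"
  unfolding valid_def
proof (intro allI impI)
  fix k assume k: "k < length (fs @ [\<phi>])"
  show "(fs @ [\<phi>]) ! k \<in> S \<or> rule_concl (set (take k (fs @ [\<phi>]))) ((fs @ [\<phi>]) ! k)"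
  proof (cases "k < length fs")
    case True
    have e1: "(fs @ [\<phi>]) ! k = fs ! k" using True by (simp add: nth_append)
    have e2: "take k (fs @ [\<phi>]) = take k fs" using True by simp
    from assms(1) True show ?thesis unfolding valid_def e1 e2 by blast
  next
    case False
    then have "k = length fs" using k by simp
    then show ?thesis using assms(2) by simp
  qed
qed

lemma der_prov: "der S \<phi> \<Longrightarrow> \<exists>fs. fs \<noteq> [] \<and> last fs = \<phi> \<and> valid S fs"
proof (induction rule: der.induct)
  case (mem \<phi>)
  then show ?case by (intro exI[of _ "[\<phi>]"]) (auto simp: valid_def)
next
  case (ax A B)
  have "rule_concl (set (take 0 [(A \<union> B, A)])) (A \<union> B, A)"
    using ax by (rule rc_ax)
  then show ?case
    by (intro exI[of _ "[(A \<union> B, A)]"]) (auto simp: valid_def)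
next
  case (cut A B C D)
  from cut.IH obtain fs1 fs2 where f1: "fs1 \<noteq> []" "last fs1 = (A,B)" "valid S fs1"
    and f2: "fs2 \<noteq> []" "last fs2 = (B \<union> C, D)" "valid S fs2" by blast
  have "(A,B) \<in> set (fs1 @ fs2)" "(B \<union> C, D) \<in> set (fs1 @ fs2)"
    using f1 f2 by (metis UnCI last_in_set set_append)+
  then have "rule_concl (set (fs1 @ fs2)) (A \<union> C, D)"
    by (rule rc_cut[OF cut.hyps(1-4)])
  then have "valid S ((fs1 @ fs2) @ [(A \<union> C, D)])"
    using valid_snoc valid_append f1 f2 by blast
  then show ?case by (intro exI[of _ "(fs1 @ fs2) @ [(A \<union> C, D)]"]) auto
next
  case (shf A B i)
  from shf.IH obtain fs1 where f1: "fs1 \<noteq> []" "last fs1 = (A,B)" "valid S fs1" by blast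
  have "(A,B) \<in> set fs1" using f1 by (metis last_in_set)
  then have "rule_concl (set fs1) (shift A i, shift B i)"
    by (rule rc_shf[OF shf.hyps(1-2)])
  then have "valid S (fs1 @ [(shift A i, shift B i)])"
    using valid_snoc f1 by blast
  then show ?case by (intro exI[of _ "fs1 @ [(shift A i, shift B i)]"]) auto
qed

lemma prov_der:
  assumes "provable S \<phi>" shows "der S \<phi>"
proof -
  obtain fs where fs: "fs \<noteq> []" "last fs = \<phi>"
    "\<forall>k<length fs. fs!k \<in> S \<or> rule_concl (set (take k fs)) (fs!k)"
    using assms unfolding provable_def by blast
  have all: "k < length fs \<Longrightarrow> der S (fs!k)" for k
  proof (induction k rule: less_induct)
    case (less k)
    have H: "\<psi> \<in> set (take k fs) \<Longrightarrow> der S \<psi>" for \<psi>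
      using less by (auto simp: in_set_conv_nth)
    from fs(3) less.prems have "fs!k \<in> S \<or> rule_concl (set (take k fs)) (fs!k)" by blast
    then show ?case
    proof
      assume "fs!k \<in> S" then show ?thesis by (rule der.mem)
    next
      assume "rule_concl (set (take k fs)) (fs!k)"
      then show ?thesis unfolding rule_concl_def
      proof (elim disjE exE conjE)
        fix A B assume "finite A" "finite B" "fs!k = (A \<union> B, A)"
        then show ?thesis using der.ax by metis
      next
        fix A B C D assume h: "finite A" "finite B" "finite C" "finite D"
          "(A, B) \<in> set (take k fs)" "(B \<union> C, D) \<in> set (take k fs)" "fs!k = (A \<union> C, D)"
        then show ?thesis using der.cut[OF h(1-4) H[OF h(5)] H[OF h(6)]] by simp
      next
        fix A B i assume h: "finite A" "finite B" "(A, B) \<in> set (take k fs)"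
          "fs!k = (shift A i, shift B i)"
        then show ?thesis using der.shf[OF h(1,2) H[OF h(3)]] by simp
      qed
    qed
  qed
  have "last fs = fs ! (length fs - 1)" using fs(1) by (simp add: last_conv_nth)
  then show ?thesis using all fs by simp
qed

lemma prov_iff: "provable S \<phi> \<longleftrightarrow> der S \<phi>"
  using prov_der der_prov unfolding provable_def valid_def by blast

lemma shift_empty[simp]: "shift {} i = {}"
  by (simp add: shift_def)
lemma shift_Un: "shift (X \<union> Y) i = shift X i \<union> shift Y i"
  by (simp add: shift_def image_Un)
lemma shift_UN: "shift (\<Union>j\<in>J. F j) i = (\<Union>j\<in>J. shift (F j) i)"
  by (simp add: shift_def image_UN)
lemma shift_shift: "shift (shift X j) i = shift X (j + i)"
  by (auto simp: shift_def image_image add.assoc case_prod_beta)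
lemma shift_0: "shift X 0 = X"
  by (auto simp: shift_def case_prod_beta)
lemma finite_shift[simp]: "finite X \<Longrightarrow> finite (shift X i)"
  by (simp add: shift_def)

lemma der_finite: "der S \<phi> \<Longrightarrow> is_theory S \<Longrightarrow> finite (fst \<phi>) \<and> finite (snd \<phi>)"
  by (induction rule: der.induct) (auto simp: is_theory_def is_fml_def)

lemma der_mono: "der S \<phi> \<Longrightarrow> S \<subseteq> T \<Longrightarrow> der T \<phi>"
proof (induction rule: der.induct)
  case (cut A B C D) then show ?case using der.cut by blast
qed (auto intro: der.mem der.ax der.shf)

definition U :: "'a tattr set \<Rightarrow> int list \<Rightarrow> 'a tattr set" where
  "U A is = (\<Union>i\<in>set is. shift A i)"

lemma finite_U: "finite A \<Longrightarrow> finite (U A is)"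
  by (auto simp: U_def)

lemma dir1:
  assumes "der (\<Sigma> \<union> {({}, A)}) \<phi>" "is_theory \<Sigma>" "finite A"
  shows "\<exists>is. der \<Sigma> (fst \<phi> \<union> U A is, snd \<phi>)"
  using assms
proof (induction rule: der.induct)
  case (mem \<phi>)
  then have "\<phi> \<in> \<Sigma> \<or> \<phi> \<in> {({}, A)}" by blast
  then show ?case
  proof
    assume "\<phi> \<in> \<Sigma>" then show ?thesis
      by (intro exI[of _ "[]"]) (auto simp: U_def intro: der.mem)
  next
    assume "\<phi> \<in> {({}, A)}"
    then have "\<phi> = ({}, A)" by simp
    moreover have "der \<Sigma> (A \<union> A, A)" using mem.prems by (intro der.ax) auto
    ultimately show ?thesis
      by (intro exI[of _ "[0]"]) (simp add: U_def shift_0)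
  qed
next
  case (ax A' B')
  then show ?case by (intro exI[of _ "[]"]) (auto simp: U_def intro: der.ax)
next
  case (cut A' B' C D)
  from cut.IH cut.prems obtain is1 is2 where
    d1: "der \<Sigma> (A' \<union> U A is1, B')" and d2: "der \<Sigma> (B' \<union> C \<union> U A is2, D)" by auto
  have "der \<Sigma> ((A' \<union> U A is1) \<union> (C \<union> U A is2), D)"
    apply (rule der.cut)
    using cut.hyps cut.prems d1 d2 by (auto simp: finite_U Un_assoc)
  moreover have "U A (is1 @ is2) = U A is1 \<union> U A is2" by (auto simp: U_def)
  ultimately show ?case
    by (intro exI[of _ "is1 @ is2"]) (simp add: Un_ac)
next
  case (shf A' B' i)
  from shf.IH shf.prems obtain is1 where d1: "der \<Sigma> (A' \<union> U A is1, B')" by auto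
  have "der \<Sigma> (shift (A' \<union> U A is1) i, shift B' i)"
    apply (rule der.shf) using shf.hyps shf.prems d1 by (auto simp: finite_U)
  moreover have "shift (U A is1) i = U A (map (\<lambda>j. j + i) is1)"
    by (simp add: U_def shift_UN shift_shift)
  ultimately show ?case
    by (intro exI[of _ "map (\<lambda>j. j + i) is1"]) (simp add: shift_Un)
qed

lemma union_empty_der:
  assumes "der S ({}, X)" "der S ({}, Y)" "finite X" "finite Y"
  shows "der S ({}, X \<union> Y)"
proof -
  have "der S (X \<union> Y, X \<union> Y)" using der.ax[of "X \<union> Y" "X \<union> Y" S] assms by simp
  then have "der S ({} \<union> Y, X \<union> Y)" using der.cut[of "{}" X Y "X \<union> Y" S] assms by auto
  then have "der S (Y, X \<union> Y)" by simp
  then have "der S ({} \<union> {}, X \<union> Y)"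
    using der.cut[of "{}" Y "{}" "X \<union> Y" S] assms by auto
  then show ?thesis by simp
qed

lemma U_der:
  assumes "finite A"
  shows "der (\<Sigma> \<union> {({}, A)}) ({}, U A xs)"
proof (induction xs)
  case Nil
  then show ?case using der.ax[of "{}" "{}"] by (simp add: U_def)
next
  case (Cons i xs)
  have a: "der (\<Sigma> \<union> {({}, A)}) ({}, A)" by (rule der.mem) simp
  have "der (\<Sigma> \<union> {({}, A)}) (shift {} i, shift A i)"
    by (rule der.shf[OF _ _ a]) (use assms in auto)
  then have "der (\<Sigma> \<union> {({}, A)}) ({}, shift A i \<union> U A xs)"
    using union_empty_der Cons assms finite_U by fastforce
  then show ?case by (simp add: U_def)
qed

theorem theorem11:
  fixes \<Sigma> :: "('a::finite) fml set" and A B :: "'a tattr set"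
  assumes "is_theory \<Sigma>" and "finite A" and "finite B"
  shows "provable (\<Sigma> \<union> {({}, A)}) ({}, B) \<longleftrightarrow>
         (\<exists>is :: int list. provable \<Sigma> (\<Union>i\<in>set is. shift A i, B))"
proof
  assume "provable (\<Sigma> \<union> {({}, A)}) ({}, B)"
  then have "der (\<Sigma> \<union> {({}, A)}) ({}, B)" by (simp add: prov_iff)
  from dir1[OF this assms(1,2)] obtain "is" where "der \<Sigma> (U A is, B)" by auto
  then have "provable \<Sigma> (\<Union>i\<in>set is. shift A i, B)" by (simp add: prov_iff U_def)
  then show "\<exists>is :: int list. provable \<Sigma> (\<Union>i\<in>set is. shift A i, B)" by blast
next
  assume "\<exists>is :: int list. provable \<Sigma> (\<Union>i\<in>set is. shift A i, B)"
  then obtain "is" where "provable \<Sigma> (\<Union>i\<in>set is. shift A i, B)" by blast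
  then have d: "der \<Sigma> (U A is, B)" by (simp add: prov_iff U_def)
  have d': "der (\<Sigma> \<union> {({}, A)}) (U A is \<union> {}, B)"
  proof -
    have "\<Sigma> \<subseteq> \<Sigma> \<union> {({}, A)}" by blast
    from der_mono[OF d this] show ?thesis by simp
  qed
  have "der (\<Sigma> \<union> {({}, A)}) ({} \<union> {}, B)"
    by (rule der.cut[OF _ _ _ _ U_der d']) (simp_all add: assms finite_U)
  then show "provable (\<Sigma> \<union> {({}, A)}) ({}, B)" by (simp add: prov_iff)
qed

end
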